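(* Let $P(q)=\sum_{j=0}^n q^ja_j$ be a slice regular polynomial of degree $n\ge1$ with quaternionic coefficients such that $P(1)=\|P\|=1$, where $\|P\|=\max_{|q|\le1}|P(q)|$, and suppose there is a real number $\delta>1$ such that $$\max_{|q|=R}|P(q)|\leq\frac{1+R^{n}}{2}\qquad\text{for all }1<R<\delta.$$ Then $P$ does not have all its zeros within the open unit ball $\mathbb B=\{q\in\mathbb H:|q|<1\}$, i.e. $P$ has a zero $q_0$ with $|q_0|\ge1$.
   Context: $\mathbb H$ denotes the quaternions with modulus $|q|=\sqrt{q\bar q}$. A slice regular polynomial of degree $n$ is a function $q\mapsto\sum_{j=0}^n q^ja_j$ with coefficients $a_j\in\mathbb H$ on the right and $a_n\neq0$; its zeros are the points $q\in\mathbb H$ with $P(q)=0$. *)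

theory Defs
  imports Complex_Main
begin

datatype quat = Quat (Re: real) (Im1: real) (Im2: real) (Im3: real)

definition qzero :: quat where "qzero = Quat 0 0 0 0"
definition qone :: quat where "qone = Quat 1 0 0 0"

definition qadd :: "quat \<Rightarrow> quat \<Rightarrow> quat" where
  "qadd p q = Quat (Re p + Re q) (Im1 p + Im1 q) (Im2 p + Im2 q) (Im3 p + Im3 q)"

definition qmul :: "quat \<Rightarrow> quat \<Rightarrow> quat" where
  "qmul p q = Quat
     (Re p * Re q - Im1 p * Im1 q - Im2 p * Im2 q - Im3 p * Im3 q)
     (Re p * Im1 q + Im1 p * Re q + Im2 p * Im3 q - Im3 p * Im2 q)
     (Re p * Im2 q - Im1 p * Im3 q + Im2 p * Re q + Im3 p * Im1 q)
     (Re p * Im3 q + Im1 p * Im2 q - Im2 p * Im1 q + Im3 p * Re q)"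

definition qnorm :: "quat \<Rightarrow> real" where
  "qnorm q = sqrt ((Re q)^2 + (Im1 q)^2 + (Im2 q)^2 + (Im3 q)^2)"

fun qpow :: "quat \<Rightarrow> nat \<Rightarrow> quat" where
  "qpow q 0 = qone"
| "qpow q (Suc k) = qmul (qpow q k) q"

fun qpoly_aux :: "(nat \<Rightarrow> quat) \<Rightarrow> nat \<Rightarrow> quat \<Rightarrow> quat" where
  "qpoly_aux a 0 q = qmul (qpow q 0) (a 0)"
| "qpoly_aux a (Suc k) q = qadd (qpoly_aux a k q) (qmul (qpow q (Suc k)) (a (Suc k)))"

definition qpoly :: "(nat \<Rightarrow> quat) \<Rightarrow> nat \<Rightarrow> quat \<Rightarrow> quat" where
  "qpoly a n q = qpoly_aux a n q"

end

theory Submission imports Defs "HOL-Analysis.Analysis" "HOL-Computational_Algebra.Fundamental_Theorem_Algebra"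
begin


definition nsq :: "quat \<Rightarrow> real" where
  "nsq q = (Defs.Re q)^2 + (Im1 q)^2 + (Im2 q)^2 + (Im3 q)^2"

definition ip :: "quat \<Rightarrow> quat \<Rightarrow> real" where
  "ip p q = Defs.Re p * Defs.Re q + Im1 p * Im1 q + Im2 p * Im2 q + Im3 p * Im3 q"

fun ab :: "real \<Rightarrow> real \<Rightarrow> nat \<Rightarrow> real \<times> real" where
  "ab u r 0 = (1, 0)"
| "ab u r (Suc j) = (- r * snd (ab u r j), fst (ab u r j) + 2 * u * snd (ab u r j))"

lemma qpow_ab:
  "qpow q j = Quat (fst (ab (Defs.Re q) (nsq q) j) + snd (ab (Defs.Re q) (nsq q) j) * Defs.Re q)
     (snd (ab (Defs.Re q) (nsq q) j) * Im1 q) (snd (ab (Defs.Re q) (nsq q) j) * Im2 q)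
     (snd (ab (Defs.Re q) (nsq q) j) * Im3 q)"
  by (induction j) (simp_all add: qone_def qmul_def nsq_def algebra_simps power2_eq_square)

lemma cpow_ab:
  "z ^ j = complex_of_real (fst (ab (Complex.Re z) ((cmod z)^2) j))
     + complex_of_real (snd (ab (Complex.Re z) ((cmod z)^2) j)) * z"
proof (induction j)
  case 0 then show ?case by simp
next
  case (Suc j)
  have zz: "z * z = 2 * complex_of_real (Complex.Re z) * z - complex_of_real ((cmod z)^2)"
    unfolding cmod_power2 by (simp add: complex_eq_iff power2_eq_square algebra_simps)
  have "z ^ Suc j = (complex_of_real (fst (ab (Complex.Re z) ((cmod z)^2) j))
     + complex_of_real (snd (ab (Complex.Re z) ((cmod z)^2) j)) * z) * z"
    using Suc by simp
  also have "\<dots> = complex_of_real (fst (ab (Complex.Re z) ((cmod z)^2) j)) * z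
     + complex_of_real (snd (ab (Complex.Re z) ((cmod z)^2) j)) * (z * z)"
    by (simp add: algebra_simps)
  also have "\<dots> = complex_of_real (fst (ab (Complex.Re z) ((cmod z)^2) (Suc j)))
     + complex_of_real (snd (ab (Complex.Re z) ((cmod z)^2) (Suc j))) * z" unfolding zz by (simp add: algebra_simps)
  finally show ?case by simp
qed

definition Aq :: "real \<Rightarrow> real \<Rightarrow> (nat \<Rightarrow> quat) \<Rightarrow> nat \<Rightarrow> quat" where
  "Aq u r a k = Quat (\<Sum>j\<le>k. fst (ab u r j) * Defs.Re (a j)) (\<Sum>j\<le>k. fst (ab u r j) * Im1 (a j))
      (\<Sum>j\<le>k. fst (ab u r j) * Im2 (a j)) (\<Sum>j\<le>k. fst (ab u r j) * Im3 (a j))"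
definition Bq :: "real \<Rightarrow> real \<Rightarrow> (nat \<Rightarrow> quat) \<Rightarrow> nat \<Rightarrow> quat" where
  "Bq u r a k = Quat (\<Sum>j\<le>k. snd (ab u r j) * Defs.Re (a j)) (\<Sum>j\<le>k. snd (ab u r j) * Im1 (a j))
      (\<Sum>j\<le>k. snd (ab u r j) * Im2 (a j)) (\<Sum>j\<le>k. snd (ab u r j) * Im3 (a j))"

lemma qpoly_AB:
  "qpoly_aux a k q = qadd (Aq (Defs.Re q) (nsq q) a k) (qmul q (Bq (Defs.Re q) (nsq q) a k))"
proof (induction k)
  case 0 then show ?case
    by (simp add: Aq_def Bq_def qadd_def qmul_def qone_def)
next
  case (Suc k)
  show ?case
    apply (simp only: qpoly_aux.simps Suc qpow_ab[of q "Suc k"])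
    apply (simp add: Aq_def Bq_def qadd_def qmul_def algebra_simps sum_distrib_left)
    done
qed

lemma ip_sum_gen:
  "(\<Sum>j\<le>k. f j * Defs.Re (a j)) * (\<Sum>j\<le>k. g j * Defs.Re (a j))
   + (\<Sum>j\<le>k. f j * Im1 (a j)) * (\<Sum>j\<le>k. g j * Im1 (a j))
   + (\<Sum>j\<le>k. f j * Im2 (a j)) * (\<Sum>j\<le>k. g j * Im2 (a j))
   + (\<Sum>j\<le>k. f j * Im3 (a j)) * (\<Sum>j\<le>k. g j * Im3 (a j))
   = (\<Sum>j\<le>k. \<Sum>i\<le>k. f j * g i * ip (a j) (a i))"
  by (simp add: ip_def sum_product sum.distrib[symmetric] algebra_simps)

lemma ip_AB: "ip (Aq u r a k) (Bq u r a k) = (\<Sum>j\<le>k. \<Sum>i\<le>k. fst (ab u r j) * snd (ab u r i) * ip (a j) (a i))"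
  unfolding Aq_def Bq_def using ip_sum_gen[where f="\<lambda>j. fst (ab u r j)" and g="\<lambda>j. snd (ab u r j)" and k=k and a=a]
  by (simp add: ip_def)
lemma ip_AA: "ip (Aq u r a k) (Aq u r a k) = (\<Sum>j\<le>k. \<Sum>i\<le>k. fst (ab u r j) * fst (ab u r i) * ip (a j) (a i))"
  unfolding Aq_def using ip_sum_gen[where f="\<lambda>j. fst (ab u r j)" and g="\<lambda>j. fst (ab u r j)" and k=k and a=a]
  by (simp add: ip_def)
lemma ip_BB: "ip (Bq u r a k) (Bq u r a k) = (\<Sum>j\<le>k. \<Sum>i\<le>k. snd (ab u r j) * snd (ab u r i) * ip (a j) (a i))"
  unfolding Bq_def using ip_sum_gen[where f="\<lambda>j. snd (ab u r j)" and g="\<lambda>j. snd (ab u r j)" and k=k and a=a]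
  by (simp add: ip_def)

lemma ip_sym: "ip p q = ip q p" by (simp add: ip_def algebra_simps)

definition Sc :: "(nat \<Rightarrow> quat) \<Rightarrow> nat \<Rightarrow> complex poly" where
  "Sc a n = (\<Sum>j\<le>n. \<Sum>k\<le>n. monom (complex_of_real (ip (a j) (a k))) (j+k))"

lemma poly_Sc: "poly (Sc a n) z = (\<Sum>j\<le>n. \<Sum>k\<le>n. complex_of_real (ip (a j) (a k)) * (z^j * z^k))"
  by (simp add: Sc_def poly_sum poly_monom power_add)

lemma Sc_AB:
  fixes z :: complex
  defines "u \<equiv> Complex.Re z" and "r \<equiv> (cmod z)^2"
  shows "poly (Sc a n) z = complex_of_real (ip (Aq u r a n) (Aq u r a n))
     + 2 * z * complex_of_real (ip (Aq u r a n) (Bq u r a n))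
     + z^2 * complex_of_real (ip (Bq u r a n) (Bq u r a n))"
proof -
  define x where "x j = complex_of_real (fst (ab u r j))" for j
  define y where "y j = complex_of_real (snd (ab u r j))" for j
  define c where "c j k = complex_of_real (ip (a j) (a k))" for j k
  have pw: "z ^ j = x j + y j * z" for j unfolding x_def y_def u_def r_def by (rule cpow_ab)
  have "poly (Sc a n) z = (\<Sum>j\<le>n. \<Sum>k\<le>n. c j k * ((x j + y j * z) * (x k + y k * z)))"
    by (simp add: poly_Sc pw c_def)
  also have "\<dots> = (\<Sum>j\<le>n. \<Sum>k\<le>n. x j * x k * c j k)
      + z * ((\<Sum>j\<le>n. \<Sum>k\<le>n. x j * y k * c j k) + (\<Sum>j\<le>n. \<Sum>k\<le>n. y j * x k * c j k))
      + z^2 * (\<Sum>j\<le>n. \<Sum>k\<le>n. y j * y k * c j k)"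
    by (simp add: sum_distrib_left sum.distrib[symmetric] algebra_simps power2_eq_square)
  also have "(\<Sum>j\<le>n. \<Sum>k\<le>n. y j * x k * c j k) = (\<Sum>j\<le>n. \<Sum>k\<le>n. x j * y k * c j k)"
    by (subst sum.swap) (simp add: c_def ip_sym mult.commute)
  finally show ?thesis
    by (simp add: ip_AA ip_AB ip_BB x_def y_def c_def)
qed

definition conjq :: "quat \<Rightarrow> quat" where
  "conjq q = Quat (Defs.Re q) (- Im1 q) (- Im2 q) (- Im3 q)"
definition qscale :: "real \<Rightarrow> quat \<Rightarrow> quat" where
  "qscale c q = Quat (c * Defs.Re q) (c * Im1 q) (c * Im2 q) (c * Im3 q)"

lemma mul_conj_mul: "qmul (qmul p (conjq q)) q = qscale (nsq q) p"
  by (simp add: qmul_def conjq_def qscale_def nsq_def power2_eq_square algebra_simps)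

lemma nsq_mul: "nsq (qmul p q) = nsq p * nsq q"
  by (simp add: nsq_def qmul_def power2_eq_square algebra_simps)

lemma nsq_scale: "nsq (qscale c q) = c^2 * nsq q"
  by (simp add: nsq_def qscale_def power2_eq_square algebra_simps)

lemma nsq_conj: "nsq (conjq q) = nsq q"
  by (simp add: nsq_def conjq_def)

lemma qmul_scale: "qmul (qscale c p) q = qscale c (qmul p q)"
  by (simp add: qmul_def qscale_def algebra_simps)

lemma ip_self: "ip q q = nsq q" by (simp add: ip_def nsq_def power2_eq_square)

lemma nsq_nonneg: "nsq q \<ge> 0" by (simp add: nsq_def)

lemma nsq_zero: "nsq q = 0 \<Longrightarrow> q = qzero"
  by (cases q) (simp add: nsq_def qzero_def add_nonneg_eq_0_iff)

lemma qnorm_nsq: "qnorm q = sqrt (nsq q)" by (simp add: qnorm_def nsq_def)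

lemma zero_from_root:
  assumes root: "poly (Sc a n) z = 0"
  shows "\<exists>q0. qpoly a n q0 = qzero \<and> qnorm q0 = cmod z"
proof -
  define u where "u = Complex.Re z"
  define v where "v = Complex.Im z"
  define r where "r = (cmod z)^2"
  have r: "r = u^2 + v^2" by (simp add: r_def u_def v_def cmod_power2)
  define A where "A = Aq u r a n"
  define B where "B = Bq u r a n"
  have rep: "qpoly a n q = qadd A (qmul q B)" if "Defs.Re q = u" "nsq q = r" for q
    unfolding qpoly_def qpoly_AB A_def B_def using that by simp
  have "0 = complex_of_real (ip A A) + 2 * z * complex_of_real (ip A B) + z^2 * complex_of_real (ip B B)"
    using root Sc_AB[of a n z] unfolding A_def B_def u_def r_def by simp
  also have "z = Complex u v" by (simp add: u_def v_def)
  finally have e: "0 = complex_of_real (ip A A) + 2 * Complex u v * complex_of_real (ip A B) + (Complex u v)^2 * complex_of_real (ip B B)" .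
  have e1: "ip A A + 2 * u * ip A B + (u^2 - v^2) * ip B B = 0"
    using arg_cong[OF e, of Complex.Re] by (simp add: power2_eq_square algebra_simps)
  have e2: "v * (2 * ip A B + 2 * u * ip B B) = 0"
    using arg_cong[OF e, of Complex.Im] by (simp add: power2_eq_square algebra_simps)
  show ?thesis
  proof (cases "v = 0")
    case True
    define q0 where "q0 = Quat u 0 0 0"
    have "nsq (qpoly a n q0) = ip A A + 2 * u * ip A B + u^2 * ip B B"
      by (subst rep) (simp_all add: q0_def nsq_def r True ip_def qadd_def qmul_def power2_eq_square algebra_simps)
    then have "nsq (qpoly a n q0) = 0" using e1 True by simp
    moreover have "qnorm q0 = cmod z" using True by (simp add: q0_def qnorm_def u_def v_def cmod_def)
    ultimately show ?thesis using nsq_zero by blast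
  next
    case False
    have "2 * ip A B + 2 * u * ip B B = 0" using e2 False by simp
    then have AB: "ip A B = - u * ip B B" by (simp add: algebra_simps)
    have AA: "ip A A = r * ip B B" using e1 AB r by (simp add: algebra_simps power2_eq_square)
    show ?thesis
    proof (cases "ip B B = 0")
      case True
      then have "B = qzero" "A = qzero" using AA by (simp_all add: ip_self nsq_zero)
      define q0 where "q0 = Quat u v 0 0"
      have "nsq q0 = r" by (simp add: q0_def nsq_def r)
      then have "qpoly a n q0 = qzero" using \<open>B = qzero\<close> \<open>A = qzero\<close>
        by (subst rep) (simp_all add: q0_def qadd_def qmul_def qzero_def)
      moreover have "qnorm q0 = cmod z" by (simp add: q0_def qnorm_def u_def v_def cmod_def)
      ultimately show ?thesis by blast
    next
      case False
      define q0 where "q0 = qscale (- 1 / ip B B) (qmul A (conjq B))"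
      have Req: "Defs.Re q0 = u" using AB False
        by (simp add: q0_def qscale_def qmul_def conjq_def ip_def field_simps)
      have nq: "nsq q0 = r" using AA False
        by (simp add: q0_def nsq_scale nsq_mul nsq_conj ip_self power2_eq_square field_simps)
      have "qpoly a n q0 = qadd A (qmul q0 B)" using rep Req nq by simp
      also have "qmul q0 B = qscale (- 1) A"
        using False unfolding q0_def qmul_scale mul_conj_mul
        by (simp add: qscale_def ip_self)
      finally have "qpoly a n q0 = qzero" by (simp add: qadd_def qscale_def qzero_def)
      moreover have "qnorm q0 = cmod z" using nq by (simp add: qnorm_nsq r_def)
      ultimately show ?thesis by blast
    qed
  qed
qed



lemma factor_ineq:
  fixes z :: complex
  assumes "cmod z < 1"
  defines "e \<equiv> 2 * Complex.Re (1 - z) / (cmod (1 - z))^2 - 1"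
  shows "e > 0" and "\<And>t. t \<ge> 0 \<Longrightarrow> (cmod (complex_of_real (1 + t) - z))^2 \<ge> (cmod (1 - z))^2 * (1 + (1 + e) * t)"
proof -
  have n: "(cmod (1 - z))^2 = (1 - Complex.Re z)^2 + (Im z)^2" by (simp add: cmod_power2)
  have z2: "(Complex.Re z)^2 + (Im z)^2 < 1" using assms(1)
    by (metis cmod_power2 less_1_mult norm_ge_zero power2_eq_square power_less_one_iff zero_less_numeral)
  have "1 - z \<noteq> 0" using assms(1) by auto
  then have pos: "(cmod (1 - z))^2 > 0" by simp
  have "2 * Complex.Re (1 - z) > (cmod (1 - z))^2" unfolding n using z2 by (simp add: power2_eq_square algebra_simps)
  then show "e > 0" unfolding e_def using pos by (simp add: field_simps)
  fix t :: real assume t: "t \<ge> 0"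
  have "(cmod (1 - z))^2 * (1 + (1 + e) * t) = (cmod (1 - z))^2 + 2 * Complex.Re (1 - z) * t"
    unfolding e_def using pos by (simp add: field_simps)
  also have "\<dots> \<le> (cmod (1 - z))^2 + 2 * Complex.Re (1 - z) * t + t^2" by simp
  also have "\<dots> = (cmod (complex_of_real (1 + t) - z))^2"
    unfolding n cmod_power2 by (simp add: power2_eq_square algebra_simps)
  finally show "(cmod (complex_of_real (1 + t) - z))^2 \<ge> (cmod (1 - z))^2 * (1 + (1 + e) * t)" .
qed

lemma growth_lemma:
  fixes p :: "complex poly"
  assumes "p \<noteq> 0" "\<forall>z. poly p z = 0 \<longrightarrow> cmod z < 1"
  shows "\<exists>\<epsilon>>0. \<forall>t\<ge>0. (cmod (poly p (complex_of_real (1+t))))^2 \<ge> (cmod (poly p 1))^2 * (1 + (1+\<epsilon>)*t)^(degree p)"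
  using assms
proof (induction "degree p" arbitrary: p)
  case 0
  then obtain c where "p = [:c:]" using degree_eq_zeroE[of p] by metis
  then show ?case by (intro exI[of _ 1]) simp
next
  case (Suc m)
  then have "\<not> constant (poly p)" using constant_degree by (metis nat.distinct(1))
  then obtain z where z: "poly p z = 0" using fundamental_theorem_of_algebra by blast
  then have zlt: "cmod z < 1" using Suc.prems by blast
  obtain q where pq: "p = [:-z, 1:] * q" using z by (meson dvdE poly_eq_0_iff_dvd)
  have q0: "q \<noteq> 0" using Suc.prems(1) pq by auto
  have dq: "degree q = m" proof -
    have "degree p = degree [:-z, 1:] + degree q" unfolding pq using q0 by (intro degree_mult_eq) auto
    then show ?thesis using Suc.hyps(2) by simp
  qed
  have qroots: "\<forall>w. poly q w = 0 \<longrightarrow> cmod w < 1" using Suc.prems(2) pq by simp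
  obtain e1 where e1: "e1 > 0" "\<forall>t\<ge>0. (cmod (poly q (complex_of_real (1+t))))^2 \<ge> (cmod (poly q 1))^2 * (1 + (1+e1)*t)^m"
    using Suc.hyps(1)[OF dq[symmetric] q0 qroots] dq by auto
  define e2 where "e2 = 2 * Complex.Re (1 - z) / (cmod (1 - z))^2 - 1"
  have e2: "e2 > 0" "\<And>t. t \<ge> 0 \<Longrightarrow> (cmod (complex_of_real (1 + t) - z))^2 \<ge> (cmod (1 - z))^2 * (1 + (1 + e2) * t)"
    using factor_ineq[OF zlt] unfolding e2_def by auto
  define e where "e = min e1 e2"
  show ?case
  proof (intro exI[of _ e] conjI allI impI)
    show "e > 0" using e1 e2 by (simp add: e_def)
    fix t :: real assume t: "t \<ge> 0"
    have m1: "1 + (1+e)*t \<le> 1 + (1+e1)*t" "1 + (1+e)*t \<le> 1 + (1+e2)*t"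
      using t by (auto simp: e_def intro!: mult_right_mono)
    have g0: "1 + (1+e)*t \<ge> 0" using t \<open>e>0\<close> e1 e2 by (simp add: e_def)
    have A: "(cmod (poly q 1))^2 * (1 + (1+e)*t)^m \<le> (cmod (poly q (complex_of_real (1+t))))^2"
      using e1(2) t power_mono[OF m1(1) g0, of m] by (meson mult_left_mono order_trans zero_le_power2)
    have B: "(cmod (1 - z))^2 * (1 + (1+e)*t) \<le> (cmod (complex_of_real (1 + t) - z))^2"
      using e2(2)[OF t] m1(2) by (meson mult_left_mono order_trans zero_le_power2)
    have "(cmod (poly p 1))^2 * (1 + (1+e)*t)^(degree p)
        = ((cmod (1 - z))^2 * (1 + (1+e)*t)) * ((cmod (poly q 1))^2 * (1 + (1+e)*t)^m)"
    proof -
      have dp: "degree p = Suc m" using Suc.hyps(2) by simp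
      have p1: "poly p 1 = (1 - z) * poly q 1" unfolding pq by (simp only: poly_mult) (simp add: algebra_simps)
      show ?thesis unfolding dp p1 norm_mult power_mult_distrib by (simp only: power_Suc mult_ac)
    qed
    also have "\<dots> \<le> (cmod (complex_of_real (1 + t) - z))^2 * (cmod (poly q (complex_of_real (1+t))))^2"
      using A B g0 by (intro mult_mono) auto
    also have "\<dots> = (cmod (poly p (complex_of_real (1+t))))^2"
    proof -
      have "poly p (complex_of_real (1+t)) = (complex_of_real (1+t) - z) * poly q (complex_of_real (1+t))"
        unfolding pq by (simp only: poly_mult) (simp add: algebra_simps)
      then show ?thesis by (simp only: norm_mult power_mult_distrib)
    qed
    finally show "(cmod (poly p (complex_of_real (1+t))))^2 \<ge> (cmod (poly p 1))^2 * (1 + (1+e)*t)^(degree p)" .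
  qed
qed



definition toq :: "(real \<times> real) \<times> (real \<times> real) \<Rightarrow> quat" where
  "toq x = Quat (fst (fst x)) (snd (fst x)) (fst (snd x)) (snd (snd x))"

definition cq :: "((real \<times> real) \<times> (real \<times> real) \<Rightarrow> quat) \<Rightarrow> bool" where
  "cq f \<longleftrightarrow> continuous_on UNIV (\<lambda>x. Defs.Re (f x)) \<and> continuous_on UNIV (\<lambda>x. Im1 (f x))
     \<and> continuous_on UNIV (\<lambda>x. Im2 (f x)) \<and> continuous_on UNIV (\<lambda>x. Im3 (f x))"

lemma cq_toq: "cq toq" unfolding cq_def toq_def by (auto intro!: continuous_intros)
lemma cq_const: "cq (\<lambda>x. c)" unfolding cq_def by auto
lemma cq_add: "cq f \<Longrightarrow> cq g \<Longrightarrow> cq (\<lambda>x. qadd (f x) (g x))"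
  unfolding cq_def qadd_def by (auto intro!: continuous_intros)
lemma cq_mul: "cq f \<Longrightarrow> cq g \<Longrightarrow> cq (\<lambda>x. qmul (f x) (g x))"
  unfolding cq_def qmul_def by (auto intro!: continuous_intros)
lemma cq_pow: "cq (\<lambda>x. qpow (toq x) k)"
  by (induction k) (auto simp: cq_const cq_toq intro!: cq_mul)
lemma cq_poly: "cq (\<lambda>x. qpoly_aux a k (toq x))"
  by (induction k) (auto simp: cq_const cq_pow cq_toq intro!: cq_mul cq_add)

lemma norm_toq: "norm x = qnorm (toq x)"
  by (cases x) (auto simp: toq_def qnorm_def norm_Pair add.assoc)

lemma max_sphere:
  assumes "R \<ge> 0"
  shows "\<exists>q. qnorm q = R \<and> (\<forall>q'. qnorm q' = R \<longrightarrow> qnorm (qpoly a n q') \<le> qnorm (qpoly a n q))"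
proof -
  have c: "continuous_on (sphere 0 R) (\<lambda>x. qnorm (qpoly a n (toq x)))"
    using cq_poly[of a n] unfolding cq_def qpoly_def qnorm_def
    by (auto intro!: continuous_intros elim: continuous_on_subset)
  have ne: "sphere (0::(real \<times> real) \<times> (real \<times> real)) R \<noteq> {}" using assms by simp
  obtain x where x: "x \<in> sphere 0 R" "\<forall>y\<in>sphere 0 R. qnorm (qpoly a n (toq y)) \<le> qnorm (qpoly a n (toq x))"
    using continuous_attains_sup[OF compact_sphere ne c] by blast
  show ?thesis
  proof (intro exI[of _ "toq x"] conjI allI impI)
    show "qnorm (toq x) = R" using x(1) norm_toq[of x] by simp
    fix q' assume q': "qnorm q' = R"
    define y where "y = ((Defs.Re q', Im1 q'), (Im2 q', Im3 q'))"
    have "toq y = q'" by (cases q') (simp add: y_def toq_def)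
    moreover have "y \<in> sphere 0 R" using q' norm_toq[of y] \<open>toq y = q'\<close> by simp
    ultimately show "qnorm (qpoly a n q') \<le> qnorm (qpoly a n (toq x))" using x(2) by metis
  qed
qed

lemma Sc_real: "poly (Sc a n) (complex_of_real x) = complex_of_real (nsq (qpoly a n (Quat x 0 0 0)))"
proof -
  have u: "Complex.Re (complex_of_real x) = x" by simp
  have r: "(cmod (complex_of_real x))^2 = x^2" by simp
  have n: "nsq (Quat x 0 0 0) = x^2" by (simp add: nsq_def)
  show ?thesis
    unfolding Sc_AB[of a n "complex_of_real x"] u r qpoly_def qpoly_AB n
    by (simp add: nsq_def ip_def qadd_def qmul_def power2_eq_square algebra_simps)
qed

lemma coeff_Sc: "coeff (Sc a n) (2*n) = complex_of_real (nsq (a n))"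
proof -
  have "coeff (Sc a n) (2*n) = (\<Sum>j\<le>n. \<Sum>k\<le>n. if j = n \<and> k = n then complex_of_real (ip (a j) (a k)) else 0)"
    unfolding Sc_def coeff_sum coeff_monom
    by (intro sum.cong refl) (auto)
  also have "\<dots> = complex_of_real (ip (a n) (a n))"
  proof -
    have i: "(\<Sum>k\<le>n. if j = n \<and> k = n then complex_of_real (ip (a j) (a k)) else 0)
          = (if j = n then complex_of_real (ip (a n) (a n)) else 0)" for j
      by (cases "j = n") simp_all
    show ?thesis unfolding i by simp
  qed
  finally show ?thesis by (simp add: ip_self)
qed



theorem theorem3p2:
  fixes a :: "nat \<Rightarrow> quat" and n :: nat
  assumes deg: "n \<ge> 1" and lead: "a n \<noteq> qzero"
    and P1: "qpoly a n qone = qone"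
    and normP: "(GREATEST r. \<exists>q. qnorm q \<le> 1 \<and> r = qnorm (qpoly a n q)) = 1"
    and growth: "\<exists>\<delta>::real. \<delta> > 1 \<and> (\<forall>R. 1 < R \<and> R < \<delta> \<longrightarrow>
         (GREATEST r. \<exists>q. qnorm q = R \<and> r = qnorm (qpoly a n q)) \<le> (1 + R ^ n) / 2)"
  shows "\<exists>q0. qpoly a n q0 = qzero \<and> qnorm q0 \<ge> 1"
proof (rule ccontr)
  assume nz: "\<not> (\<exists>q0. qpoly a n q0 = qzero \<and> qnorm q0 \<ge> 1)"
  obtain \<delta> :: real where d1: "\<delta> > 1" and gr: "\<And>R. 1 < R \<Longrightarrow> R < \<delta> \<Longrightarrow>
         (GREATEST r. \<exists>q. qnorm q = R \<and> r = qnorm (qpoly a n q)) \<le> (1 + R ^ n) / 2"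
    using growth by blast
  have bound: "nsq (qpoly a n (Quat R 0 0 0)) \<le> ((1 + R ^ n) / 2)^2" if R: "1 < R" "R < \<delta>" for R
  proof -
    obtain q where q: "qnorm q = R" "\<forall>q'. qnorm q' = R \<longrightarrow> qnorm (qpoly a n q') \<le> qnorm (qpoly a n q)"
      using max_sphere[of R a n] R by auto
    have G: "(GREATEST r. \<exists>q. qnorm q = R \<and> r = qnorm (qpoly a n q)) = qnorm (qpoly a n q)"
      by (rule Greatest_equality) (use q in auto)
    have qR: "qnorm (Quat R 0 0 0) = R" using R by (simp add: qnorm_def)
    have "qnorm (qpoly a n (Quat R 0 0 0)) \<le> (1 + R ^ n) / 2"
      using q(2) qR gr[OF R] G by fastforce
    moreover have "qnorm (qpoly a n (Quat R 0 0 0)) \<ge> 0" by (simp add: qnorm_def)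
    ultimately have "(qnorm (qpoly a n (Quat R 0 0 0)))^2 \<le> ((1 + R ^ n) / 2)^2"
      by (rule power_mono)
    then show ?thesis by (simp add: qnorm_nsq nsq_nonneg)
  qed
  have roots: "\<forall>z. poly (Sc a n) z = 0 \<longrightarrow> cmod z < 1"
  proof (intro allI impI)
    fix z assume "poly (Sc a n) z = 0"
    then obtain q0 where "qpoly a n q0 = qzero" "qnorm q0 = cmod z" using zero_from_root by blast
    then show "cmod z < 1" using nz by (metis not_less)
  qed
  have cf: "coeff (Sc a n) (2*n) \<noteq> 0"
    unfolding coeff_Sc using lead nsq_zero by auto
  then have S0: "Sc a n \<noteq> 0" by auto
  have dg: "2*n \<le> degree (Sc a n)" using cf by (rule le_degree)
  obtain \<epsilon> where e: "\<epsilon> > 0" "\<forall>t\<ge>0. (cmod (poly (Sc a n) (complex_of_real (1+t))))^2 \<ge> (cmod (poly (Sc a n) 1))^2 * (1 + (1+\<epsilon>)*t)^(degree (Sc a n))"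
    using growth_lemma[OF S0 roots] by blast
  have S1: "poly (Sc a n) 1 = 1"
    using Sc_real[of a n 1] P1 by (simp add: qone_def nsq_def)
  have ineq: "(1 + (1+\<epsilon>)*t)^(2*n) \<le> ((1 + (1+t)^n)/2)^4" if t: "0 < t" "t < \<delta> - 1" for t
  proof -
    have "(1 + (1+\<epsilon>)*t)^(2*n) \<le> (1 + (1+\<epsilon>)*t)^(degree (Sc a n))"
      using dg t e(1) by (intro power_increasing) auto
    also have "\<dots> \<le> (cmod (poly (Sc a n) (complex_of_real (1+t))))^2"
      using e(2) t S1 by auto
    also have "cmod (poly (Sc a n) (complex_of_real (1+t))) = nsq (qpoly a n (Quat (1+t) 0 0 0))"
      unfolding Sc_real norm_of_real using nsq_nonneg by simp
    also have "(nsq (qpoly a n (Quat (1+t) 0 0 0)))^2 \<le> (((1 + (1+t)^n)/2)^2)^2"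
      using bound[of "1+t"] t by (intro power_mono) (auto simp: nsq_nonneg)
    finally show ?thesis by simp
  qed
  define f where "f t = (1 + (1+\<epsilon>)*t)^(2*n) - ((1 + (1+t)^n)/2)^4" for t :: real
  have "DERIV f 0 :> 2 * real n * \<epsilon>"
    unfolding f_def
    by (rule derivative_eq_intros refl | simp add: algebra_simps)+
  moreover have "2 * real n * \<epsilon> > 0" using deg e(1) by simp
  ultimately obtain d where d: "d > 0" "\<forall>h>0. h < d \<longrightarrow> f 0 < f (0 + h)"
    using DERIV_pos_inc_right by blast
  define h where "h = min d (\<delta> - 1) / 2"
  have h: "h > 0" "h < d" "h < \<delta> - 1" using d(1) d1 by (auto simp: h_def)
  have "f 0 < f h" using d(2) h by auto
  moreover have "f 0 = 0" by (simp add: f_def)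
  moreover have "f h \<le> 0" using ineq[OF h(1) h(3)] by (simp add: f_def)
  ultimately show False by simp
qed


end
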